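(* Let $T=(L,R,\tau,\sigma)$ be a rewrite rule and $m:L\to G$ a matching with respect to $T$. Let $(\mathcal{H},\tau_1,\delta)$ be a pushout of $\tau$ and $|m|$ in the category of sets ($\tau_1:|G|\to\mathcal{H}$, $\delta:|R|\to\mathcal{H}$, $\delta\circ\tau=\tau_1\circ|m|$), let $\Gamma=|G|-|m(L)|$, $\Sigma=\mathrm{dom}(\sigma)$, $\Delta=|R|-\Sigma$, and let $\sigma_1:\mathcal{H}\rightharpoonup|G|$ be the unique partial function with domain $\delta(\Sigma)$ such that $|m|\circ\sigma=\sigma_1\circ\delta$ on $\Sigma$. Let $H$ be the graph with set of nodes $\mathcal{H}$ determined by requiring that $\tau_1$ is strictly graphic on $\Gamma$, that $\delta$ is strictly graphic on $\Delta$, and that each node $n_1\in\delta(\Sigma)$ is a $\tau_1$-clone of $\sigma_1(n_1)$. Then $\delta$ underlies a graph morphism $d:R\to H$, and $(H,\tau_1,d,\sigma_1)$ is a cloning pushout of $T$ and $m$, i.e. an initial object of the category of cloning cones over $T$ and $m$.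
   Context: A signature $\Omega$ assigns an arity to each symbol; for a function $f$, $f^*$ acts letterwise on strings. A termgraph (graph) $G$ has node set $|G|$, a subset of labeled nodes, a labeling $\mathcal{L}_G$ of labeled nodes by symbols of $\Omega$ and a successor function $\mathcal{S}_G$ giving each labeled node a string of nodes of length the arity of its label. A graph morphism $g:G\to H$ is a function $|G|\to|H|$ sending labeled nodes to labeled nodes with $\mathcal{L}_H(g(n))=\mathcal{L}_G(n)$ and $\mathcal{S}_H(g(n))=g^*(\mathcal{S}_G(n))$ for each labeled $n$; $|g|$ is its underlying function. A function $\gamma:|G|\to|H|$ is graphic at a node $n$ if $n$ is unlabeled or both $n,\gamma(n)$ are labeled with $\mathcal{L}_H(\gamma(n))=\mathcal{L}_G(n)$, $\mathcal{S}_H(\gamma(n))=\gamma^*(\mathcal{S}_G(n))$; strictly graphic at $n$ if both $n,\gamma(n)$ are unlabeled or both are labeled with these equalities; (strictly) graphic on a set if so at each node of it. For $\tau:|G|\to|H|$, a node $p\in|H|$ is a $\tau$-clone of $q\in|G|$ if $p$ is labeled iff $q$ is, and then $\mathcal{L}_H(p)=\mathcal{L}_G(q)$ and $\mathcal{S}_H(p)=\tau^*(\mathcal{S}_G(q))$. A rewrite rule is $(L,R,\tau,\sigma)$ with $L,R$ graphs, $\tau:|L|\to|R|$ a function, $\sigma:|R|\rightharpoonup|L|$ a partial function such that each $n\in\mathrm{dom}(\sigma)$ is unlabeled or a $\tau$-clone of $\sigma(n)$. A morphism of rewrite rules $(L,R,\tau,\sigma)\to(L_1,R_1,\tau_1,\sigma_1)$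 is a pair of graph morphisms $m:L\to L_1$, $d:R\to R_1$ with $|d|\circ\tau=\tau_1\circ|m|$, $d(\mathrm{dom}(\sigma))\subseteq\mathrm{dom}(\sigma_1)$ and $|m|\circ\sigma=\sigma_1\circ|d|$ on $\mathrm{dom}(\sigma)$. A matching with respect to $T=(L,R,\tau,\sigma)$ is a graph morphism $m:L\to G$ such that whenever $m(p)=m(p')$ for distinct $p,p'\in|L|$, then $\tau(p),\tau(p')\in\mathrm{dom}(\sigma)$ and $\sigma(\tau(p))=\sigma(\tau(p'))$. A cloning cone over $T$ and $m:L\to G$ is a tuple $(H,\tau_1,d,\sigma_1)$ with $H$ a graph, $\tau_1:|G|\to|H|$ a function, $d:R\to H$ a graph morphism, $\sigma_1:|H|\rightharpoonup|G|$ a partial function, such that $(G,H,\tau_1,\sigma_1)$ is a rewrite rule, $(m,d)$ is a morphism of rewrite rules from $T$ to $(G,H,\tau_1,\sigma_1)$, $\tau_1$ is graphic on $|G|-|m(L)|$, and every $n_1\in\mathrm{dom}(\sigma_1)$ is a $\tau_1$-clone of $\sigma_1(n_1)$. A morphism of cloning cones $(H,\tau_1,d,\sigma_1)\to(H',\tau_1',d',\sigma_1')$ is a graph morphism $h:H\to H'$ with $|h|\circ\tau_1=\tau_1'$, $h\circ d=d'$, $h(\mathrm{dom}(\sigma_1))\subseteq\mathrm{dom}(\sigma_1')$ and $\sigma_1'\circ|h|=\sigma_1$ on $\mathrm{dom}(\sigma_1)$; this defines the category of cloning cones over $T$ and $m$. *)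

theory Defs
  imports Main
begin

text \<open>Values of lab/succ outside labeled nodes are irrelevant.\<close>

record ('n, 'f) tgraph =
  nodes :: "'n set"
  lab   :: "'n \<Rightarrow> 'f option"
  succ  :: "'n \<Rightarrow> 'n list"

definition labeled :: "('n, 'f) tgraph \<Rightarrow> 'n \<Rightarrow> bool" where
  "labeled G n \<longleftrightarrow> lab G n \<noteq> None"

definition wf_graph :: "('f \<Rightarrow> nat) \<Rightarrow> ('n, 'f) tgraph \<Rightarrow> bool" where
  "wf_graph ar G \<longleftrightarrow>
     (\<forall>n. labeled G n \<longrightarrow> n \<in> nodes G \<and>
        length (succ G n) = ar (the (lab G n)) \<and> set (succ G n) \<subseteq> nodes G)"

definition graph_hom :: "('a, 'f) tgraph \<Rightarrow> ('b, 'f) tgraph \<Rightarrow> ('a \<Rightarrow> 'b) \<Rightarrow> bool" where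
  "graph_hom G H g \<longleftrightarrow> g ` nodes G \<subseteq> nodes H \<and>
     (\<forall>n\<in>nodes G. labeled G n \<longrightarrow>
        lab H (g n) = lab G n \<and> succ H (g n) = map g (succ G n))"

definition graphic_at :: "('a, 'f) tgraph \<Rightarrow> ('b, 'f) tgraph \<Rightarrow> ('a \<Rightarrow> 'b) \<Rightarrow> 'a \<Rightarrow> bool" where
  "graphic_at G H \<gamma> n \<longleftrightarrow> \<not> labeled G n \<or>
     (labeled H (\<gamma> n) \<and> lab H (\<gamma> n) = lab G n \<and> succ H (\<gamma> n) = map \<gamma> (succ G n))"

definition strictly_graphic_at :: "('a, 'f) tgraph \<Rightarrow> ('b, 'f) tgraph \<Rightarrow> ('a \<Rightarrow> 'b) \<Rightarrow> 'a \<Rightarrow> bool" where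
  "strictly_graphic_at G H \<gamma> n \<longleftrightarrow> (\<not> labeled G n \<and> \<not> labeled H (\<gamma> n)) \<or>
     (labeled G n \<and> labeled H (\<gamma> n) \<and> lab H (\<gamma> n) = lab G n \<and> succ H (\<gamma> n) = map \<gamma> (succ G n))"

definition is_clone :: "('a, 'f) tgraph \<Rightarrow> ('b, 'f) tgraph \<Rightarrow> ('a \<Rightarrow> 'b) \<Rightarrow> 'b \<Rightarrow> 'a \<Rightarrow> bool" where
  "is_clone G H \<tau> p q \<longleftrightarrow> (labeled H p \<longleftrightarrow> labeled G q) \<and>
     (labeled G q \<longrightarrow> lab H p = lab G q \<and> succ H p = map \<tau> (succ G q))"

definition rewrite_rule :: "('f \<Rightarrow> nat) \<Rightarrow> ('a, 'f) tgraph \<Rightarrow> ('b, 'f) tgraph \<Rightarrow>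
    ('a \<Rightarrow> 'b) \<Rightarrow> ('b \<Rightarrow> 'a option) \<Rightarrow> bool" where
  "rewrite_rule ar L R \<tau> \<sigma> \<longleftrightarrow> wf_graph ar L \<and> wf_graph ar R \<and>
     \<tau> ` nodes L \<subseteq> nodes R \<and> dom \<sigma> \<subseteq> nodes R \<and> ran \<sigma> \<subseteq> nodes L \<and>
     (\<forall>n\<in>dom \<sigma>. \<not> labeled R n \<or> is_clone L R \<tau> n (the (\<sigma> n)))"

definition rule_morphism :: "('a, 'f) tgraph \<Rightarrow> ('b, 'f) tgraph \<Rightarrow> ('a \<Rightarrow> 'b) \<Rightarrow> ('b \<Rightarrow> 'a option) \<Rightarrow>
    ('c, 'f) tgraph \<Rightarrow> ('d, 'f) tgraph \<Rightarrow> ('c \<Rightarrow> 'd) \<Rightarrow> ('d \<Rightarrow> 'c option) \<Rightarrow>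
    ('a \<Rightarrow> 'c) \<Rightarrow> ('b \<Rightarrow> 'd) \<Rightarrow> bool" where
  "rule_morphism L R \<tau> \<sigma> L1 R1 \<tau>1 \<sigma>1 m d \<longleftrightarrow> graph_hom L L1 m \<and> graph_hom R R1 d \<and>
     (\<forall>x\<in>nodes L. d (\<tau> x) = \<tau>1 (m x)) \<and> d ` dom \<sigma> \<subseteq> dom \<sigma>1 \<and>
     (\<forall>n\<in>dom \<sigma>. \<sigma>1 (d n) = Some (m (the (\<sigma> n))))"

definition matching :: "('a, 'f) tgraph \<Rightarrow> ('b, 'f) tgraph \<Rightarrow> ('a \<Rightarrow> 'b) \<Rightarrow> ('b \<Rightarrow> 'a option) \<Rightarrow>
    ('g, 'f) tgraph \<Rightarrow> ('a \<Rightarrow> 'g) \<Rightarrow> bool" where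
  "matching L R \<tau> \<sigma> G m \<longleftrightarrow> graph_hom L G m \<and>
     (\<forall>p\<in>nodes L. \<forall>p'\<in>nodes L. p \<noteq> p' \<and> m p = m p' \<longrightarrow>
        \<tau> p \<in> dom \<sigma> \<and> \<tau> p' \<in> dom \<sigma> \<and> \<sigma> (\<tau> p) = \<sigma> (\<tau> p'))"

definition cloning_cone :: "('f \<Rightarrow> nat) \<Rightarrow> ('a, 'f) tgraph \<Rightarrow> ('b, 'f) tgraph \<Rightarrow> ('a \<Rightarrow> 'b) \<Rightarrow>
    ('b \<Rightarrow> 'a option) \<Rightarrow> ('g, 'f) tgraph \<Rightarrow> ('a \<Rightarrow> 'g) \<Rightarrow>
    ('h, 'f) tgraph \<Rightarrow> ('g \<Rightarrow> 'h) \<Rightarrow> ('b \<Rightarrow> 'h) \<Rightarrow> ('h \<Rightarrow> 'g option) \<Rightarrow> bool" where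
  "cloning_cone ar L R \<tau> \<sigma> G m H \<tau>1 d \<sigma>1 \<longleftrightarrow>
     rewrite_rule ar G H \<tau>1 \<sigma>1 \<and> rule_morphism L R \<tau> \<sigma> G H \<tau>1 \<sigma>1 m d \<and>
     (\<forall>n\<in>nodes G - m ` nodes L. graphic_at G H \<tau>1 n) \<and>
     (\<forall>n1\<in>dom \<sigma>1. is_clone G H \<tau>1 n1 (the (\<sigma>1 n1)))"

definition cone_morphism :: "('a, 'f) tgraph \<Rightarrow> ('b, 'f) tgraph \<Rightarrow> ('g, 'f) tgraph \<Rightarrow>
    ('h, 'f) tgraph \<Rightarrow> ('g \<Rightarrow> 'h) \<Rightarrow> ('b \<Rightarrow> 'h) \<Rightarrow> ('h \<Rightarrow> 'g option) \<Rightarrow>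
    ('k, 'f) tgraph \<Rightarrow> ('g \<Rightarrow> 'k) \<Rightarrow> ('b \<Rightarrow> 'k) \<Rightarrow> ('k \<Rightarrow> 'g option) \<Rightarrow> ('h \<Rightarrow> 'k) \<Rightarrow> bool" where
  "cone_morphism L R G H \<tau>1 d \<sigma>1 H' \<tau>1' d' \<sigma>1' h \<longleftrightarrow> graph_hom H H' h \<and>
     (\<forall>x\<in>nodes G. h (\<tau>1 x) = \<tau>1' x) \<and> (\<forall>x\<in>nodes R. h (d x) = d' x) \<and>
     h ` dom \<sigma>1 \<subseteq> dom \<sigma>1' \<and> (\<forall>n\<in>dom \<sigma>1. \<sigma>1' (h n) = \<sigma>1 n)"

text \<open>Initial object of the category of cloning cones over T and m, where the
  competing cones range over graphs with nodes of type 'k (a free type variable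
  in the theorem, hence arbitrary).  Morphisms are identified when they agree on
  the nodes of H.\<close>
definition cloning_pushout :: "'k itself \<Rightarrow> ('f \<Rightarrow> nat) \<Rightarrow> ('a, 'f) tgraph \<Rightarrow> ('b, 'f) tgraph \<Rightarrow>
    ('a \<Rightarrow> 'b) \<Rightarrow> ('b \<Rightarrow> 'a option) \<Rightarrow> ('g, 'f) tgraph \<Rightarrow> ('a \<Rightarrow> 'g) \<Rightarrow>
    ('h, 'f) tgraph \<Rightarrow> ('g \<Rightarrow> 'h) \<Rightarrow> ('b \<Rightarrow> 'h) \<Rightarrow> ('h \<Rightarrow> 'g option) \<Rightarrow> bool" where
  "cloning_pushout (_ :: 'k itself) ar L R \<tau> \<sigma> G m H \<tau>1 d \<sigma>1 \<longleftrightarrow>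
     cloning_cone ar L R \<tau> \<sigma> G m H \<tau>1 d \<sigma>1 \<and>
     (\<forall>(H' :: ('k, 'f) tgraph) \<tau>1' d' \<sigma>1'. cloning_cone ar L R \<tau> \<sigma> G m H' \<tau>1' d' \<sigma>1' \<longrightarrow>
        (\<exists>h. cone_morphism L R G H \<tau>1 d \<sigma>1 H' \<tau>1' d' \<sigma>1' h \<and>
           (\<forall>h'. cone_morphism L R G H \<tau>1 d \<sigma>1 H' \<tau>1' d' \<sigma>1' h' \<longrightarrow>
                 (\<forall>y\<in>nodes H. h' y = h y))))"

text \<open>The universal property is tested against all sets of type 'x;
  the theorem instantiates 'x with ('c + 'b) set, which contains (an isomorphic
  copy of) the canonical pushout, so this is equivalent to the full universal
  property in Set.\<close>
definition set_pushout :: "'x itself \<Rightarrow> 'a set \<Rightarrow> 'b set \<Rightarrow> 'c set \<Rightarrow> ('a \<Rightarrow> 'b) \<Rightarrow> ('a \<Rightarrow> 'c) \<Rightarrow>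
    'h set \<Rightarrow> ('c \<Rightarrow> 'h) \<Rightarrow> ('b \<Rightarrow> 'h) \<Rightarrow> bool" where
  "set_pushout (_ :: 'x itself) A B C t f Hs t1 dl \<longleftrightarrow>
     t ` A \<subseteq> B \<and> f ` A \<subseteq> C \<and> t1 ` C \<subseteq> Hs \<and> dl ` B \<subseteq> Hs \<and>
     (\<forall>x\<in>A. dl (t x) = t1 (f x)) \<and>
     (\<forall>(X :: 'x set) u v. u ` C \<subseteq> X \<longrightarrow> v ` B \<subseteq> X \<longrightarrow> (\<forall>x\<in>A. v (t x) = u (f x)) \<longrightarrow>
        (\<exists>h. h ` Hs \<subseteq> X \<and> (\<forall>x\<in>C. h (t1 x) = u x) \<and> (\<forall>x\<in>B. h (dl x) = v x) \<and>
           (\<forall>h'. h' ` Hs \<subseteq> X \<and> (\<forall>x\<in>C. h' (t1 x) = u x) \<and> (\<forall>x\<in>B. h' (dl x) = v x) \<longrightarrow>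
                 (\<forall>y\<in>Hs. h' y = h y))))"

end

theory Submission
  imports Defs
begin

lemma po_surj:
  assumes "set_pushout TYPE('x set) A B C t f Hs t1 dl"
  shows "Hs \<subseteq> t1 ` C \<union> dl ` B"
proof
  fix y assume y: "y \<in> Hs"
  from assms[unfolded set_pushout_def] obtain h0 :: "_ \<Rightarrow> 'x set" where
    h0: "(\<forall>x\<in>C. h0 (t1 x) = {})" "(\<forall>x\<in>B. h0 (dl x) = {})"
    "\<forall>h'. h' ` Hs \<subseteq> UNIV \<and> (\<forall>x\<in>C. h' (t1 x) = {}) \<and> (\<forall>x\<in>B. h' (dl x) = {}) \<longrightarrow>
                 (\<forall>y\<in>Hs. h' y = h0 y)"
    by (elim conjE allE[where x=UNIV] allE[where x="\<lambda>_. {}"] impE) auto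
  show "y \<in> t1 ` C \<union> dl ` B"
  proof (rule ccontr)
    assume n: "y \<notin> t1 ` C \<union> dl ` B"
    define h2 where "h2 = (\<lambda>z. if z \<in> t1 ` C \<union> dl ` B then h0 z else - h0 z)"
    have "\<forall>x\<in>C. h2 (t1 x) = {}" "\<forall>x\<in>B. h2 (dl x) = {}" using h0 by (auto simp: h2_def)
    with h0(3) y have "h2 y = h0 y" by blast
    with n show False by (auto simp: h2_def)
  qed
qed

lemma rtr_resp:
  assumes "(z, z') \<in> (R0 \<union> R0\<inverse>)\<^sup>*" "\<forall>(a,b)\<in>R0. g a = g b"
  shows "g z = g z'"
  using assms(1)
proof (induction rule: rtrancl_induct)
  case base then show ?case by simp
next
  case (step y w) then show ?case using assms(2) by auto
qed

lemma po_kernel: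
  fixes t :: "'a \<Rightarrow> 'b" and f :: "'a \<Rightarrow> 'c"
  assumes po: "set_pushout TYPE(('c + 'b) set) A B C t f Hs t1 dl"
    and z: "z \<in> Inl ` C \<union> Inr ` B" and z': "z' \<in> Inl ` C \<union> Inr ` B"
    and eq: "case_sum t1 dl z = case_sum t1 dl z'"
  shows "(z, z') \<in> ({(Inr (t a), Inl (f a)) | a. a \<in> A} \<union> {(Inr (t a), Inl (f a)) | a. a \<in> A}\<inverse>)\<^sup>*"
proof -
  define R0 where "R0 = {(Inr (t a) :: 'c + 'b, Inl (f a) :: 'c + 'b) | a. a \<in> A}"
  define r where "r = (R0 \<union> R0\<inverse>)\<^sup>*"
  have symr: "sym r" unfolding r_def by (intro sym_rtrancl) (auto simp: sym_def)
  have trr: "trans r" unfolding r_def by (rule trans_rtrancl)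
  have cls: "r `` {x} = r `` {y}" if "(x, y) \<in> r" for x y
    using that symr trr unfolding sym_def trans_def by blast
  define u where "u = (\<lambda>x. r `` {Inl x})"
  define v where "v = (\<lambda>x. r `` {Inr x})"
  have compat: "\<forall>x\<in>A. v (t x) = u (f x)"
  proof
    fix x assume "x \<in> A"
    then have "(Inr (t x), Inl (f x)) \<in> r" unfolding r_def R0_def by blast
    then show "v (t x) = u (f x)" unfolding u_def v_def by (rule cls)
  qed
  from po[unfolded set_pushout_def] compat obtain h0 where
    h0: "\<forall>x\<in>C. h0 (t1 x) = u x" "\<forall>x\<in>B. h0 (dl x) = v x"
    by (elim conjE allE[where x=UNIV] allE[where x=u] allE[where x=v] impE) auto
  have "h0 (case_sum t1 dl z) = r `` {z}" using z h0 by (auto simp: u_def v_def)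
  moreover have "h0 (case_sum t1 dl z') = r `` {z'}" using z' h0 by (auto simp: u_def v_def)
  ultimately have "r `` {z} = r `` {z'}" using eq by simp
  moreover have "z' \<in> r `` {z'}" by (simp add: r_def)
  ultimately have "(z, z') \<in> r" by (metis Image_singleton_iff)
  then show ?thesis by (simp add: r_def R0_def)
qed

lemma po_exists:
  fixes t :: "'a \<Rightarrow> 'b" and f :: "'a \<Rightarrow> 'c" and u :: "'c \<Rightarrow> 'k"
  assumes po: "set_pushout TYPE(('c + 'b) set) A B C t f Hs t1 dl"
    and compat: "\<forall>x\<in>A. v (t x) = u (f x)"
  shows "\<exists>h. (\<forall>x\<in>C. h (t1 x) = u x) \<and> (\<forall>x\<in>B. h (dl x) = v x)"
proof -
  define S where "S = Inl ` C \<union> Inr ` B"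
  define g where "g = case_sum u v"
  define h where "h = (\<lambda>y. g (SOME z. z \<in> S \<and> case_sum t1 dl z = y))"
  have resp: "\<forall>(a,b)\<in>{(Inr (t a), Inl (f a)) | a. a \<in> A}. g a = g b"
    using compat by (auto simp: g_def)
  have key: "h (case_sum t1 dl z) = g z" if "z \<in> S" for z
  proof -
    let ?z' = "SOME z'. z' \<in> S \<and> case_sum t1 dl z' = case_sum t1 dl z"
    have "?z' \<in> S \<and> case_sum t1 dl ?z' = case_sum t1 dl z"
      by (rule someI[where x=z]) (use that in auto)
    then have "g ?z' = g z"
      using po_kernel[OF po _ that[unfolded S_def]] rtr_resp[OF _ resp] unfolding S_def by blast
    then show ?thesis by (simp add: h_def)
  qed
  show ?thesis
  proof (intro exI conjI ballI)
    fix x assume "x \<in> C" then show "h (t1 x) = u x" using key[of "Inl x"] by (simp add: S_def g_def)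
  next
    fix x assume "x \<in> B" then show "h (dl x) = v x" using key[of "Inr x"] by (simp add: S_def g_def)
  qed
qed

theorem theorem1:
  fixes ar :: "'f \<Rightarrow> nat"
    and L :: "('l, 'f) tgraph" and R :: "('r, 'f) tgraph" and G :: "('g, 'f) tgraph"
    and \<tau> :: "'l \<Rightarrow> 'r" and \<sigma> :: "'r \<Rightarrow> 'l option" and m :: "'l \<Rightarrow> 'g"
    and Hs :: "'h set" and \<tau>1 :: "'g \<Rightarrow> 'h" and \<delta> :: "'r \<Rightarrow> 'h"
    and \<sigma>1 :: "'h \<Rightarrow> 'g option" and H :: "('h, 'f) tgraph"
  assumes rule: "rewrite_rule ar L R \<tau> \<sigma>"
    and wfG: "wf_graph ar G"
    and match: "matching L R \<tau> \<sigma> G m"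
    and po: "set_pushout TYPE(('g + 'r) set) (nodes L) (nodes R) (nodes G) \<tau> m Hs \<tau>1 \<delta>"
    and sigma1_dom: "dom \<sigma>1 = \<delta> ` dom \<sigma>"
    and sigma1_eq: "\<forall>n\<in>dom \<sigma>. \<sigma>1 (\<delta> n) = Some (m (the (\<sigma> n)))"
    and wfH: "wf_graph ar H"
    and H_nodes: "nodes H = Hs"
    and H_Gamma: "\<forall>n\<in>nodes G - m ` nodes L. strictly_graphic_at G H \<tau>1 n"
    and H_Delta: "\<forall>n\<in>nodes R - dom \<sigma>. strictly_graphic_at R H \<delta> n"
    and H_Sigma: "\<forall>n1\<in>\<delta> ` dom \<sigma>. is_clone G H \<tau>1 n1 (the (\<sigma>1 n1))"
  shows "graph_hom R H \<delta> \<and> cloning_pushout TYPE('k) ar L R \<tau> \<sigma> G m H \<tau>1 \<delta> \<sigma>1"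
proof -
  have wfL: "wf_graph ar L" and wfR: "wf_graph ar R" and ranS: "ran \<sigma> \<subseteq> nodes L"
    and clR: "\<forall>n\<in>dom \<sigma>. \<not> labeled R n \<or> is_clone L R \<tau> n (the (\<sigma> n))"
    using rule by (auto simp: rewrite_rule_def)
  have mhom: "graph_hom L G m" using match by (simp add: matching_def)
  have t1C: "\<tau>1 ` nodes G \<subseteq> Hs" and dB: "\<delta> ` nodes R \<subseteq> Hs"
    and comm: "\<forall>x\<in>nodes L. \<delta> (\<tau> x) = \<tau>1 (m x)"
    using po by (auto simp: set_pushout_def)
  have cover: "Hs \<subseteq> \<tau>1 ` nodes G \<union> \<delta> ` nodes R" by (rule po_surj[OF po])
  have lab_in: "labeled X n \<Longrightarrow> wf_graph ar X \<Longrightarrow> n \<in> nodes X \<and> set (succ X n) \<subseteq> nodes X"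
    for X :: "('z, 'f) tgraph" and n by (auto simp: wf_graph_def)
  have sig_in: "the (\<sigma> n) \<in> nodes L" if "n \<in> dom \<sigma>" for n
    using that ranS by (auto simp: ran_def)
  have dhom: "graph_hom R H \<delta>"
    unfolding graph_hom_def
  proof (intro conjI ballI impI)
    show "\<delta> ` nodes R \<subseteq> nodes H" using dB H_nodes by simp
  next
    fix n assume n: "n \<in> nodes R" and ln: "labeled R n"
    have "lab H (\<delta> n) = lab R n \<and> succ H (\<delta> n) = map \<delta> (succ R n)"
    proof (cases "n \<in> dom \<sigma>")
      case False
      with H_Delta n ln show ?thesis by (auto simp: strictly_graphic_at_def)
    next
      case True
      define q where "q = the (\<sigma> n)"
      have q: "q \<in> nodes L" using sig_in[OF True] by (simp add: q_def)
      have c: "is_clone L R \<tau> n q" using clR True ln by (auto simp: q_def)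
      have lq: "labeled L q" using c ln by (simp add: is_clone_def)
      have mq: "lab G (m q) = lab L q" "succ G (m q) = map m (succ L q)"
        using mhom q lq by (auto simp: graph_hom_def)
      have "\<sigma>1 (\<delta> n) = Some (m q)" using sigma1_eq True by (simp add: q_def)
      moreover have "is_clone G H \<tau>1 (\<delta> n) (the (\<sigma>1 (\<delta> n)))" using H_Sigma True by blast
      ultimately have c2: "is_clone G H \<tau>1 (\<delta> n) (m q)" by simp
      have lmq: "labeled G (m q)" using mq lq by (simp add: labeled_def)
      have sL: "set (succ L q) \<subseteq> nodes L" using lab_in[OF lq wfL] by simp
      have "succ H (\<delta> n) = map \<tau>1 (map m (succ L q))" using c2 lmq mq by (simp add: is_clone_def)
      also have "\<dots> = map \<delta> (map \<tau> (succ L q))" using sL comm by (auto simp: subset_iff)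
      also have "\<dots> = map \<delta> (succ R n)" using c lq by (simp add: is_clone_def)
      finally show ?thesis using c2 lmq mq c lq by (simp add: is_clone_def)
    qed
    then show "lab H (\<delta> n) = lab R n" "succ H (\<delta> n) = map \<delta> (succ R n)" by auto
  qed
  have cone: "cloning_cone ar L R \<tau> \<sigma> G m H \<tau>1 \<delta> \<sigma>1"
    unfolding cloning_cone_def
  proof (intro conjI)
    show "rewrite_rule ar G H \<tau>1 \<sigma>1"
      unfolding rewrite_rule_def
    proof (intro conjI)
      have "dom \<sigma> \<subseteq> nodes R" using rule by (simp add: rewrite_rule_def)
      then have "\<delta> ` dom \<sigma> \<subseteq> \<delta> ` nodes R" by (rule image_mono)
      then show "dom \<sigma>1 \<subseteq> nodes H" using sigma1_dom dB H_nodes by simp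
      show "ran \<sigma>1 \<subseteq> nodes G"
      proof
        fix y assume "y \<in> ran \<sigma>1"
        then obtain x where "\<sigma>1 x = Some y" by (auto simp: ran_def)
        then have "x \<in> \<delta> ` dom \<sigma>" using sigma1_dom by blast
        then obtain n where "n \<in> dom \<sigma>" "x = \<delta> n" by blast
        then show "y \<in> nodes G" using sigma1_eq \<open>\<sigma>1 x = Some y\<close> sig_in mhom
          by (auto simp: graph_hom_def)
      qed
      show "\<forall>n\<in>dom \<sigma>1. \<not> labeled H n \<or> is_clone G H \<tau>1 n (the (\<sigma>1 n))"
        using H_Sigma sigma1_dom by auto
    qed (use wfG wfH t1C H_nodes in auto)
    show "rule_morphism L R \<tau> \<sigma> G H \<tau>1 \<sigma>1 m \<delta>"
      unfolding rule_morphism_def using mhom dhom comm sigma1_dom sigma1_eq by auto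
    show "\<forall>n\<in>nodes G - m ` nodes L. graphic_at G H \<tau>1 n"
      using H_Gamma by (auto simp: graphic_at_def strictly_graphic_at_def)
    show "\<forall>n1\<in>dom \<sigma>1. is_clone G H \<tau>1 n1 (the (\<sigma>1 n1))"
      using H_Sigma sigma1_dom by auto
  qed
  have univ: "\<exists>h. cone_morphism L R G H \<tau>1 \<delta> \<sigma>1 H' \<tau>1' d' \<sigma>1' h \<and>
           (\<forall>h'. cone_morphism L R G H \<tau>1 \<delta> \<sigma>1 H' \<tau>1' d' \<sigma>1' h' \<longrightarrow>
                 (\<forall>y\<in>nodes H. h' y = h y))"
    if c': "cloning_cone ar L R \<tau> \<sigma> G m H' \<tau>1' d' \<sigma>1'" for H' :: "('k, 'f) tgraph" and \<tau>1' d' \<sigma>1'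
  proof -
    have rr': "rewrite_rule ar G H' \<tau>1' \<sigma>1'" and rm': "rule_morphism L R \<tau> \<sigma> G H' \<tau>1' \<sigma>1' m d'"
      and gr': "\<forall>n\<in>nodes G - m ` nodes L. graphic_at G H' \<tau>1' n"
      and cl': "\<forall>n1\<in>dom \<sigma>1'. is_clone G H' \<tau>1' n1 (the (\<sigma>1' n1))"
      using c' by (auto simp: cloning_cone_def)
    have dhom': "graph_hom R H' d'" and comm': "\<forall>x\<in>nodes L. d' (\<tau> x) = \<tau>1' (m x)"
      and dsig': "d' ` dom \<sigma> \<subseteq> dom \<sigma>1'" and seq': "\<forall>n\<in>dom \<sigma>. \<sigma>1' (d' n) = Some (m (the (\<sigma> n)))"
      using rm' by (auto simp: rule_morphism_def)
    have t1C': "\<tau>1' ` nodes G \<subseteq> nodes H'" using rr' by (simp add: rewrite_rule_def)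
    have dB': "d' ` nodes R \<subseteq> nodes H'" using dhom' by (simp add: graph_hom_def)
    obtain h where h1: "\<forall>x\<in>nodes G. h (\<tau>1 x) = \<tau>1' x" and h2: "\<forall>x\<in>nodes R. h (\<delta> x) = d' x"
      using po_exists[OF po, of d' \<tau>1'] comm' by auto
    have hH: "h ` nodes H \<subseteq> nodes H'"
    proof
      fix z assume "z \<in> h ` nodes H"
      then obtain y where y: "y \<in> Hs" "z = h y" using H_nodes by auto
      then have "y \<in> \<tau>1 ` nodes G \<union> \<delta> ` nodes R" using cover by blast
      then show "z \<in> nodes H'"
      proof
        assume "y \<in> \<tau>1 ` nodes G"
        then obtain x where "x \<in> nodes G" "y = \<tau>1 x" by blast
        then show ?thesis using y h1 t1C' by auto
      next
        assume "y \<in> \<delta> ` nodes R"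
        then obtain x where "x \<in> nodes R" "y = \<delta> x" by blast
        then show ?thesis using y h2 dB' by auto
      qed
    qed
    have hlab: "lab H' (h y) = lab H y \<and> succ H' (h y) = map h (succ H y)"
      if y: "y \<in> nodes H" and ly: "labeled H y" for y
    proof -
      have yc: "y \<in> \<tau>1 ` (nodes G - m ` nodes L) \<or> y \<in> \<delta> ` dom \<sigma> \<or> y \<in> \<delta> ` (nodes R - dom \<sigma>)"
      proof -
        from y cover H_nodes have "y \<in> \<tau>1 ` nodes G \<union> \<delta> ` nodes R" by auto
        then show ?thesis
        proof
          assume "y \<in> \<tau>1 ` nodes G"
          then obtain x where x: "x \<in> nodes G" "y = \<tau>1 x" by blast
          show ?thesis
          proof (cases "x \<in> m ` nodes L")
            case True
            then obtain a where "a \<in> nodes L" "x = m a" by blast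
            then have "y = \<delta> (\<tau> a)" "\<tau> a \<in> nodes R" using comm x rule by (auto simp: rewrite_rule_def)
            then show ?thesis by blast
          qed (use x in blast)
        qed blast
      qed
      show ?thesis
      proof -
        { assume "y \<in> \<tau>1 ` (nodes G - m ` nodes L)"
          then obtain x where x: "x \<in> nodes G" "x \<notin> m ` nodes L" "y = \<tau>1 x" by blast
          have sg: "strictly_graphic_at G H \<tau>1 x" using H_Gamma x by blast
          then have lx: "labeled G x" using ly x by (auto simp: strictly_graphic_at_def)
          have e1: "lab H y = lab G x" "succ H y = map \<tau>1 (succ G x)" using sg lx x
            by (auto simp: strictly_graphic_at_def)
          have "graphic_at G H' \<tau>1' x" using gr' x by blast
          then have e2: "lab H' (\<tau>1' x) = lab G x" "succ H' (\<tau>1' x) = map \<tau>1' (succ G x)"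
            using lx by (auto simp: graphic_at_def)
          have sG: "set (succ G x) \<subseteq> nodes G" using lab_in[OF lx wfG] by simp
          have ?thesis using e1 e2 h1 x sG by (auto simp: subset_iff) }
        moreover
        { assume "y \<in> \<delta> ` (nodes R - dom \<sigma>)"
          then obtain n where n: "n \<in> nodes R" "n \<notin> dom \<sigma>" "y = \<delta> n" by blast
          have sg: "strictly_graphic_at R H \<delta> n" using H_Delta n by blast
          then have ln: "labeled R n" using ly n by (auto simp: strictly_graphic_at_def)
          have e1: "lab H y = lab R n" "succ H y = map \<delta> (succ R n)" using sg ln n
            by (auto simp: strictly_graphic_at_def)
          have e2: "lab H' (d' n) = lab R n" "succ H' (d' n) = map d' (succ R n)"
            using dhom' n ln by (auto simp: graph_hom_def)
          have sR: "set (succ R n) \<subseteq> nodes R" using lab_in[OF ln wfR] by simp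
          have ?thesis using e1 e2 h2 n sR by (auto simp: subset_iff) }
        moreover
        { assume "y \<in> \<delta> ` dom \<sigma>"
          then obtain n where n: "n \<in> dom \<sigma>" "y = \<delta> n" by blast
          have nR: "n \<in> nodes R" using n rule by (auto simp: rewrite_rule_def)
          define q where "q = m (the (\<sigma> n))"
          have qG: "q \<in> nodes G" using sig_in[OF n(1)] mhom by (auto simp: q_def graph_hom_def)
          have "is_clone G H \<tau>1 y (the (\<sigma>1 y))" using H_Sigma n by blast
          then have c1: "is_clone G H \<tau>1 y q" using sigma1_eq n by (simp add: q_def)
          then have lq: "labeled G q" using ly by (simp add: is_clone_def)
          have "d' n \<in> dom \<sigma>1'" using dsig' n by blast
          then have "is_clone G H' \<tau>1' (d' n) (the (\<sigma>1' (d' n)))" using cl' by blast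
          then have c2: "is_clone G H' \<tau>1' (d' n) q" using seq' n by (simp add: q_def)
          have sG: "set (succ G q) \<subseteq> nodes G" using lab_in[OF lq wfG] by simp
          have ?thesis using c1 c2 lq h1 h2 nR n sG by (auto simp: is_clone_def subset_iff) }
        ultimately show ?thesis using yc by blast
      qed
    qed
    have dm: "h ` dom \<sigma>1 \<subseteq> dom \<sigma>1'"
    proof
      fix z assume "z \<in> h ` dom \<sigma>1"
      then obtain n where n: "n \<in> dom \<sigma>" "z = h (\<delta> n)" using sigma1_dom by auto
      have "n \<in> nodes R" using n rule by (auto simp: rewrite_rule_def)
      then have "z = d' n" using n h2 by auto
      moreover have "d' n \<in> dom \<sigma>1'" using dsig' n(1) by (rule subsetD[OF _ imageI])
      ultimately show "z \<in> dom \<sigma>1'" by simp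
    qed
    have sm: "\<forall>n\<in>dom \<sigma>1. \<sigma>1' (h n) = \<sigma>1 n"
    proof
      fix n assume "n \<in> dom \<sigma>1"
      then obtain k where k: "k \<in> dom \<sigma>" "n = \<delta> k" using sigma1_dom by auto
      have "k \<in> nodes R" using k rule by (auto simp: rewrite_rule_def)
      then show "\<sigma>1' (h n) = \<sigma>1 n" using k h2 seq' sigma1_eq by auto
    qed
    have gh: "graph_hom H H' h" unfolding graph_hom_def using hH hlab by blast
    have cm: "cone_morphism L R G H \<tau>1 \<delta> \<sigma>1 H' \<tau>1' d' \<sigma>1' h"
      unfolding cone_morphism_def using gh h1 h2 dm sm by blast
    show ?thesis
    proof (intro exI conjI allI impI ballI)
      show "cone_morphism L R G H \<tau>1 \<delta> \<sigma>1 H' \<tau>1' d' \<sigma>1' h" by (rule cm)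
      fix h' y assume c: "cone_morphism L R G H \<tau>1 \<delta> \<sigma>1 H' \<tau>1' d' \<sigma>1' h'" and y: "y \<in> nodes H"
      from c have "\<forall>x\<in>nodes G. h' (\<tau>1 x) = \<tau>1' x" "\<forall>x\<in>nodes R. h' (\<delta> x) = d' x"
        by (auto simp: cone_morphism_def)
      moreover have "y \<in> \<tau>1 ` nodes G \<union> \<delta> ` nodes R" using y cover H_nodes by blast
      ultimately show "h' y = h y" using h1 h2 by auto
    qed
  qed
  show ?thesis
    unfolding cloning_pushout_def using dhom cone univ by blast
qed

end
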